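(* Let $f_0\in C^\infty([0,\infty))$ be a monotone solution of \[ f''(y)+\left(\frac{2}{y}-\frac{y}{2}\right)f'(y)-\frac{1}{y^2}\sin(2f(y))=0\ \ (y>0),\qquad f(0)=0,\qquad \lim_{y\to\infty}f(y)\ \text{finite}, \] satisfying $\lVert f_0-\widetilde f_0\rVert\le 5\cdot10^{-4}$ (notation in the context), and let $\mathcal A_0$ denote the differential expression $\mathcal A_0 w=-\frac{1}{\rho}\partial_y(\rho\,\partial_yw)+\frac{2\cos(2f_0(y))}{y^2}w$ with $\rho(y)=y^2e^{-y^2/4}$. For $\lambda\in\mathbb R$ let $W_\lambda$ be the unique solution of the initial value problem $\mathcal A_0W_\lambda=\lambda W_\lambda$ on $(0,\infty)$, $W_\lambda(0)=0$, $W_\lambda'(0)=1$. If $\lambda\le -1$, then $W_\lambda$ has no zeros in $(0,\infty)$.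
   Context: Here $\widetilde f_0(y)=2\arctan\big(\sum_{n=0}^{14}(f_0)_nT_{2n+1}(y/\sqrt{2+y^2})\big)$ with $T_m$ the Chebyshev polynomials of the first kind and coefficients $(f_0)_0,\dots,(f_0)_{14}$ equal to $\frac{268245}{72878},\frac{-3174}{105551},\frac{1897}{97022},\frac{14}{72731},\frac{79}{119383},\frac{4}{66337},\frac{5}{109368},\frac{1}{109045},\frac{1}{204079},\frac{1}{675805},\frac{1}{1400761},\frac{1}{3586839},\frac{1}{7289041},\frac{1}{16940631},\frac{1}{59286294}$; $\lVert f\rVert=\lVert p_1f\rVert_{L^\infty(0,\infty)}+\lVert p_3f'\rVert_{L^\infty(0,\infty)}$ with $p_1(y)=\frac{\sqrt{2+y^2}}{\sqrt2\,y}$, $p_3(y)=\frac{(2+y^2)^{3/2}}{2\sqrt2}$. The initial conditions at the regular singular point $y=0$ mean $W_\lambda(y)=y+o(y)$ as $y\to0$. *)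

theory Defs
  imports "HOL-Analysis.Analysis"
begin

fun cheb_T :: "nat \<Rightarrow> real \<Rightarrow> real" where
  "cheb_T 0 x = 1"
| "cheb_T (Suc 0) x = x"
| "cheb_T (Suc (Suc n)) x = 2 * x * cheb_T (Suc n) x - cheb_T n x"

definition f0_coeffs :: "real list" where
  "f0_coeffs = [268245/72878, -3174/105551, 1897/97022, 14/72731, 79/119383,
     4/66337, 5/109368, 1/109045, 1/204079, 1/675805, 1/1400761, 1/3586839,
     1/7289041, 1/16940631, 1/59286294]"

definition f0_approx :: "real \<Rightarrow> real" where
  "f0_approx y = 2 * arctan (\<Sum>n<15. f0_coeffs ! n * cheb_T (2*n+1) (y / sqrt (2 + y^2)))"

definition p1 :: "real \<Rightarrow> real" where
  "p1 y = sqrt (2 + y^2) / (sqrt 2 * y)"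

definition p3 :: "real \<Rightarrow> real" where
  "p3 y = (2 + y^2) powr (3/2) / (2 * sqrt 2)"

text \<open>Weighted norm ||f|| = ||p1 f||_Linf(0,inf) + ||p3 f'||_Linf(0,inf) is at most eps
  (for the continuous functions considered, the essential sup is the sup over (0,inf)).\<close>
definition weighted_norm_le :: "(real \<Rightarrow> real) \<Rightarrow> real \<Rightarrow> bool" where
  "weighted_norm_le f eps \<longleftrightarrow>
     (\<exists>A B. A + B \<le> eps \<and> (\<forall>y>0. \<bar>p1 y * f y\<bar> \<le> A) \<and> (\<forall>y>0. \<bar>p3 y * deriv f y\<bar> \<le> B))"

definition smooth_on_nonneg :: "(real \<Rightarrow> real) \<Rightarrow> bool" where
  "smooth_on_nonneg f \<longleftrightarrow> (\<exists>D :: nat \<Rightarrow> real \<Rightarrow> real. D 0 = f \<and>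
     (\<forall>n y. y \<ge> 0 \<longrightarrow> (D n has_real_derivative D (Suc n) y) (at y within {0..})))"

definition rho :: "real \<Rightarrow> real" where
  "rho y = y^2 * exp (- (y^2) / 4)"

end

theory Submission
  imports Defs
begin
lemma cheb_cos2: "cheb_T n (cos t) = cos (real n * t) \<and> cheb_T (Suc n) (cos t) = cos (real (Suc n) * t)"
proof (induction n)
  case (Suc n)
  have "cos (real (Suc (Suc n)) * t) = cos (real (Suc n) * t + t)" by (simp add: algebra_simps)
  moreover have "cos (real n * t) = cos (real (Suc n) * t - t)" by (simp add: algebra_simps)
  ultimately have "cos (real (Suc (Suc n)) * t) = 2 * cos t * cos (real (Suc n) * t) - cos (real n * t)"
    by (simp add: cos_add cos_diff)
  with Suc show ?case by simp
qed auto

lemma cheb_cos: "cheb_T n (cos t) = cos (real n * t)"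
  using cheb_cos2 by blast

lemma abs_sin_mult: "\<bar>sin (real m * s)\<bar> \<le> real m * \<bar>sin s\<bar>"
proof (induction m)
  case (Suc m)
  have "sin (real (Suc m) * s) = sin (real m * s) * cos s + cos (real m * s) * sin s"
    using sin_add[of "real m * s" s] by (simp add: algebra_simps)
  hence "\<bar>sin (real (Suc m) * s)\<bar> \<le> \<bar>sin (real m * s)\<bar> * \<bar>cos s\<bar> + \<bar>cos (real m * s)\<bar> * \<bar>sin s\<bar>"
    using abs_triangle_ineq[of "sin (real m * s) * cos s" "cos (real m * s) * sin s"] by (simp add: abs_mult)
  also have "\<dots> \<le> \<bar>sin (real m * s)\<bar> + \<bar>sin s\<bar>"
    by (intro add_mono mult_right_le_one_le mult_left_le_one_le) auto
  also have "\<dots> \<le> real (Suc m) * \<bar>sin s\<bar>" using Suc by (simp add: algebra_simps)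
  finally show ?case .
qed simp

lemma cheb_bound1: "\<bar>x\<bar> \<le> 1 \<Longrightarrow> \<bar>cheb_T n x\<bar> \<le> 1"
proof -
  assume "\<bar>x\<bar> \<le> 1"
  hence "cos (arccos x) = x" by (simp add: abs_le_iff)
  thus ?thesis using cheb_cos[of n "arccos x"] abs_cos_le_one by metis
qed

lemma cheb_bound_odd: assumes "\<bar>x\<bar> \<le> 1" shows "\<bar>cheb_T (2*k+1) x\<bar> \<le> real (2*k+1) * \<bar>x\<bar>"
proof -
  define s where "s = pi/2 - arccos x"
  have x: "x = sin s" unfolding s_def using assms by (simp add: sin_diff cos_arccos abs_le_iff)
  have "cheb_T (2*k+1) x = cos (real (2*k+1) * (pi/2 - s))"
    using cheb_cos[of "2*k+1" "arccos x"] assms by (simp add: s_def abs_le_iff)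
  also have "\<dots> = cos (real (Suc (2*k)) * pi/2) * cos (real (2*k+1) * s) + sin (real (Suc (2*k)) * pi/2) * sin (real (2*k+1) * s)"
    by (simp add: right_diff_distrib cos_diff)
  also have "cos (real (Suc (2*k)) * pi/2) = 0"
    unfolding cos_zero_iff_int2 by (rule exI[of _ "int k"]) (simp add: algebra_simps)
  finally show ?thesis using abs_sin_mult[of "2*k+1" s] x sin_cos_npi[of k] by (simp add: abs_mult)
qed

lemma R1: "(\<Sum>n\<in>{1..<15}. \<bar>f0_coeffs ! n\<bar> * real (2*n+1)) \<le> 1/5"
  unfolding atLeastLessThan_upt sum_set_upt_conv_sum_list_nat
  by (simp add: f0_coeffs_def upt_rec)
lemma R0: "(\<Sum>n\<in>{1..<15}. \<bar>f0_coeffs ! n\<bar>) \<le> 1/10"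
  unfolding atLeastLessThan_upt sum_set_upt_conv_sum_list_nat
  by (simp add: f0_coeffs_def upt_rec)
lemma c0: "f0_coeffs ! 0 = 268245/72878" by (simp add: f0_coeffs_def)

definition S :: "real \<Rightarrow> real" where
  "S x = (\<Sum>n<15. f0_coeffs ! n * cheb_T (2*n+1) x)"

lemma S_split: "S x = 268245/72878 * x + (\<Sum>n\<in>{1..<15}. f0_coeffs ! n * cheb_T (2*n+1) x)"
proof -
  have "S x = (\<Sum>n\<in>{0..<15}. f0_coeffs ! n * cheb_T (2*n+1) x)"
    unfolding S_def by (simp add: lessThan_atLeast0)
  also have "\<dots> = f0_coeffs ! 0 * cheb_T 1 x + (\<Sum>n\<in>{1..<15}. f0_coeffs ! n * cheb_T (2*n+1) x)"
    by (subst sum.atLeast_Suc_lessThan) auto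
  finally show ?thesis by (simp add: c0)
qed

lemma S_bounds:
  assumes "0 \<le> x" "x \<le> 1"
  shows "S x \<ge> (268245/72878 - 1/5) * x" "\<bar>S x\<bar> \<le> 268245/72878 + 1/10"
proof -
  let ?R = "\<Sum>n\<in>{1..<15}. f0_coeffs ! n * cheb_T (2*n+1) x"
  have ax: "\<bar>x\<bar> \<le> 1" using assms by simp
  have "\<bar>?R\<bar> \<le> (\<Sum>n\<in>{1..<15}. \<bar>f0_coeffs ! n * cheb_T (2*n+1) x\<bar>)" by (rule sum_abs)
  also have "\<dots> \<le> (\<Sum>n\<in>{1..<15}. \<bar>f0_coeffs ! n\<bar> * real (2*n+1) * x)"
    using cheb_bound_odd[OF ax] assms
    by (intro sum_mono) (simp add: abs_mult mult.assoc mult_left_mono)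
  also have "\<dots> = (\<Sum>n\<in>{1..<15}. \<bar>f0_coeffs ! n\<bar> * real (2*n+1)) * x"
    by (simp add: sum_distrib_right)
  also have "\<dots> \<le> 1/5 * x" using R1 assms by (intro mult_right_mono) auto
  finally have 1: "\<bar>?R\<bar> \<le> 1/5 * x" .
  have "\<bar>?R\<bar> \<le> (\<Sum>n\<in>{1..<15}. \<bar>f0_coeffs ! n * cheb_T (2*n+1) x\<bar>)" by (rule sum_abs)
  also have "\<dots> \<le> (\<Sum>n\<in>{1..<15}. \<bar>f0_coeffs ! n\<bar>)"
    using cheb_bound1[OF ax]
    by (intro sum_mono) (simp add: abs_mult mult_left_le)
  finally have 2: "\<bar>?R\<bar> \<le> 1/10" using R0 by linarith
  show "S x \<ge> (268245/72878 - 1/5) * x" using 1 S_split[of x] by (simp add: algebra_simps abs_le_iff)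
  show "\<bar>S x\<bar> \<le> 268245/72878 + 1/10"
  proof -
    have "\<bar>S x\<bar> \<le> \<bar>268245/72878 * x\<bar> + \<bar>?R\<bar>" unfolding S_split by (rule abs_triangle_ineq)
    also have "\<bar>268245/72878 * x\<bar> \<le> 268245/72878" using assms by simp
    finally show ?thesis using 2 by linarith
  qed
qed

lemma arctan_lower: assumes "0 \<le> u" shows "u / (1 + u^2) \<le> arctan u"
proof -
  let ?h = "\<lambda>u. arctan u - u / (1 + u^2)"
  have "?h 0 \<le> ?h u"
  proof (rule DERIV_nonneg_imp_nondecreasing[OF assms])
    fix t :: real assume "0 \<le> t" "t \<le> u"
    define d where "d = 1 + t^2"
    have dpos: "d > 0" unfolding d_def by (simp add: add_pos_nonneg)
    have a: "(arctan has_real_derivative inverse (1 + t^2)) (at t)" by (rule DERIV_arctan)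
    have e: "((\<lambda>u. 1 + u^2) has_real_derivative 2*t) (at t)" by (auto intro!: derivative_eq_intros)
    have b: "((\<lambda>u. u / (1 + u^2)) has_real_derivative ((1 * (1 + t^2) - 2 * t * t) / ((1 + t^2) * (1 + t^2)))) (at t)"
      using DERIV_quotient[OF DERIV_ident e] dpos d_def by auto
    have "(?h has_real_derivative (inverse (1 + t^2) - (1 * (1 + t^2) - 2 * t * t) / ((1 + t^2) * (1 + t^2)))) (at t)"
      by (rule DERIV_diff[OF a b])
    moreover have "inverse (1 + t^2) - (1 * (1 + t^2) - 2 * t * t) / ((1 + t^2) * (1 + t^2)) = 2 * t^2 / (d * d)"
    proof -
      have eq: "inverse d - (1 * d - 2 * t * t) / (d * d) = 2 * t^2 / (d * d)"
        using dpos by (simp add: field_simps power2_eq_square)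
      show ?thesis unfolding d_def[symmetric] by (rule eq)
    qed
    moreover have "2 * t^2 / (d * d) \<ge> 0" using dpos by simp
    ultimately show "\<exists>y. (?h has_real_derivative y) (at t) \<and> 0 \<le> y" by auto
  qed
  thus ?thesis by simp
qed

lemma close_pointwise:
  assumes "weighted_norm_le (\<lambda>y. f y - g y) (5 / 10^4)" "y > 0"
  shows "\<bar>f y - g y\<bar> \<le> 3/4000 * (y / sqrt (2 + y^2))"
proof -
  obtain A B where AB: "A + B \<le> 5/10^4" "\<forall>y>0. \<bar>p1 y * (f y - g y)\<bar> \<le> A"
      "\<forall>y>0. \<bar>p3 y * deriv (\<lambda>y. f y - g y) y\<bar> \<le> B"
    using assms(1) unfolding weighted_norm_le_def by blast
  have "B \<ge> 0" using AB(3)[rule_format, of 1] by linarith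
  hence A: "A \<le> 5/10^4" using AB(1) by linarith
  have q: "sqrt (2 + y^2) > 0" by (simp add: add_pos_nonneg)
  have s2: "sqrt 2 \<le> 3/2" by (rule real_le_lsqrt) (auto simp: power2_eq_square)
  have "\<bar>p1 y * (f y - g y)\<bar> \<le> 5/10^4" using AB(2) assms(2) A by force
  hence "\<bar>p1 y\<bar> * \<bar>f y - g y\<bar> \<le> 5/10^4" by (simp add: abs_mult)
  hence "\<bar>f y - g y\<bar> \<le> 5/10^4 / p1 y" using assms(2) q
    by (simp add: p1_def field_simps abs_mult)
  also have "\<dots> = 5/10^4 * sqrt 2 * (y / sqrt (2 + y^2))" using q assms(2) by (simp add: p1_def field_simps)
  also have "\<dots> \<le> 5/10^4 * (3/2) * (y / sqrt (2 + y^2))" using s2 q assms(2)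
    by (intro mult_right_mono mult_left_mono) auto
  finally show ?thesis by simp
qed

lemma f0_approx_S: "f0_approx y = 2 * arctan (S (y / sqrt (2 + y^2)))"
  unfolding f0_approx_def S_def by simp

lemma x_bounds: assumes "y > 0" shows "0 < y / sqrt (2 + y^2)" "y / sqrt (2 + y^2) < 1"
proof -
  have q: "sqrt (2 + y^2) > 0" by (simp add: add_pos_nonneg)
  show "0 < y / sqrt (2 + y^2)" using q assms by simp
  have "y < sqrt (2 + y^2)" using assms by (intro real_less_rsqrt) simp
  thus "y / sqrt (2 + y^2) < 1" using q by simp
qed

lemma f_bounds:
  assumes close: "weighted_norm_le (\<lambda>y. f y - f0_approx y) (5 / 10^4)" and y: "y > 0"
  shows "f y \<ge> 1/2 * (y / sqrt (2 + y^2))" "f y < pi" "y \<ge> 1 \<Longrightarrow> f y > pi/2"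
proof -
  define x where "x = y / sqrt (2 + y^2)"
  have x0: "0 < x" "x < 1" using x_bounds[OF y] unfolding x_def by auto
  have err: "\<bar>f y - 2 * arctan (S x)\<bar> \<le> 3/4000 * x"
    using close_pointwise[OF close y] unfolding x_def f0_approx_S .
  define a :: real where "a = 268245/72878 - 1/5"
  have a: "a > 3" "a < 4" unfolding a_def by simp_all
  have Sx: "S x \<ge> a * x" "\<bar>S x\<bar> \<le> 268245/72878 + 1/10"
    using S_bounds[of x] x0 unfolding a_def by auto
  have "arctan (a * x) \<ge> (a*x) / (1 + (a*x)^2)" using a x0 by (intro arctan_lower) simp
  moreover have "(a*x) / (1 + (a*x)^2) \<ge> (a*x) / (1 + a^2)"
  proof (rule divide_left_mono)
    have "x^2 \<le> 1" using x0 by (simp add: power_le_one)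
    hence "a^2 * x^2 \<le> a^2" by (simp add: mult_left_le)
    thus "1 + (a*x)^2 \<le> 1 + a^2" by (simp add: power_mult_distrib)
  qed (use a x0 in \<open>auto simp: add_pos_nonneg\<close>)
  moreover have "arctan (S x) \<ge> arctan (a * x)" using Sx by (simp add: arctan_le_iff)
  ultimately have "arctan (S x) \<ge> a / (1 + a^2) * x" by simp
  moreover have "2 * (a / (1 + a^2)) - 3/4000 \<ge> 1/2"
  proof -
    have a2: "a \<le> 349/100" "a \<ge> 348/100" unfolding a_def by simp_all
    have "a^2 \<le> 349/100 * a" using a2 a by (simp add: power2_eq_square mult_right_mono)
    hence "2003/4000 + 2003/4000 * a^2 \<le> 2 * a" using a2 by linarith
    hence "(1/2 + 3/4000) * (1 + a^2) \<le> 2 * a" by (simp add: algebra_simps)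
    moreover have "1 + a^2 > 0" by (simp add: add_pos_nonneg)
    ultimately show ?thesis by (simp add: field_simps)
  qed
  ultimately have h: "arctan (S x) \<ge> a / (1 + a^2) * x" "2 * (a / (1 + a^2)) - 3/4000 \<ge> 1/2" by auto
  have h1: "f y \<ge> 2 * (a / (1 + a^2) * x) - 3/4000 * x" using err h(1) unfolding abs_le_iff by linarith
  have h2: "(2 * (a / (1 + a^2)) - 3/4000) * x \<ge> 1/2 * x" using h(2) x0 by (intro mult_right_mono) auto
  have h3: "2 * (a / (1 + a^2) * x) - 3/4000 * x = (2 * (a / (1 + a^2)) - 3/4000) * x" by (simp add: algebra_simps)
  show "f y \<ge> 1/2 * x" using h1 h2 h3 by linarith
  define b :: real where "b = 268245/72878 + 1/10"
  have b: "b > 0" unfolding b_def by simp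
  have "arctan (S x) \<le> arctan b" using Sx unfolding b_def by (simp add: arctan_le_iff abs_le_iff)
  moreover have "arctan (1/b) = pi/2 - arctan b" using arctan_inverse[of b] b by (simp add: inverse_eq_divide)
  moreover have "arctan (1/b) \<ge> (1/b) / (1 + (1/b)^2)" using b by (intro arctan_lower) simp
  moreover have "(1/b) / (1 + (1/b)^2) \<ge> 1/5"
  proof -
    define u where "u = 1/b"
    have u: "u \<ge> 1/4" "u \<le> 3/10" unfolding u_def b_def by simp_all
    hence "u^2 \<le> 9/100" using power_mono[of u "3/10" 2] by (simp add: power2_eq_square)
    hence "1 + u^2 \<le> 109/100" by simp
    hence "(1/4) / (109/100) \<le> u / (1 + u^2)" using u
      by (intro frac_le) (auto simp: add_pos_nonneg)
    thus ?thesis unfolding u_def by simp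
  qed
  ultimately have "arctan (S x) \<le> pi/2 - 1/5" by linarith
  thus "f y < pi" using err x0 by linarith
  assume y1: "y \<ge> 1"
  have q: "sqrt (2 + y^2) > 0" by (simp add: add_pos_nonneg)
  have xe: "x^2 = y^2 / (2 + y^2)" unfolding x_def by (simp add: power_divide)
  have "y^2 \<ge> 1" using y1 by (simp add: one_le_power)
  hence "y^2 / (2 + y^2) \<ge> 1/3" by (simp add: field_simps add_pos_nonneg)
  hence "x^2 \<ge> 1/3" using xe by simp
  hence "x^2 \<ge> (14/25)^2" by (simp add: power2_eq_square)
  hence "x \<ge> 14/25" using x0 by (simp add: power_mono_iff)
  hence "a * x \<ge> a * (14/25)" using a by (intro mult_left_mono) auto
  moreover have "a \<ge> 348/100" unfolding a_def by simp
  ultimately have "S x \<ge> 19/10" using Sx by linarith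
  hence "arctan (S x) \<ge> arctan (19/10)" by (simp add: arctan_le_iff)
  moreover have "arctan (10/19) = pi/2 - arctan (19/10)" using arctan_inverse[of "19/10"] by (simp add: inverse_eq_divide)
  moreover have "arctan (10/19) \<le> 10/19" by (rule arctan_le_self) simp
  ultimately have "arctan (S x) \<ge> pi/2 - 10/19" by linarith
  thus "f y > pi/2" using err x0 pi_gt3 by linarith
qed

lemma to_at: "(f has_real_derivative f') (at y within {0..}) \<Longrightarrow> 0 < y \<Longrightarrow> (f has_real_derivative f') (at y)"
proof -
  assume a: "(f has_real_derivative f') (at y within {0..})" "0 < y"
  have "(f has_real_derivative f') (at y within {0<..})" by (rule DERIV_subset[OF a(1)]) auto
  thus ?thesis using at_within_open[of y "{0<..}"] a(2) by simp
qed

lemma ode_diff: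
  assumes d0: "\<forall>t>0. (f0 has_real_derivative f1 t) (at t)"
    and d1: "\<forall>t>0. (f1 has_real_derivative f2 t) (at t)"
    and d2: "\<forall>t>0. (f2 has_real_derivative f3 t) (at t)"
    and ode: "\<forall>t>0. f2 t + (2/t - t/2) * f1 t - sin (2 * f0 t) / t^2 = 0"
    and y: "y > 0"
  shows "2*y*f2 y + y^2 * f3 y + (2 - 3*y^2/2) * f1 y + (2*y - y^3/2) * f2 y - 2 * cos (2 * f0 y) * f1 y = 0"
proof -
  define E where "E t = t^2 * f2 t + (2*t - t^3/2) * f1 t - sin (2 * f0 t)" for t
  have E0: "E t = 0" if "t \<in> {0<..}" for t
  proof -
    have t: "t > 0" using that by simp
    have o: "f2 t + (2/t - t/2) * f1 t = sin (2 * f0 t) / t^2" using ode t by simp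
    have "t^2 * f2 t + (2*t - t^3/2) * f1 t = t^2 * (f2 t + (2/t - t/2) * f1 t)"
      using t by (simp add: field_simps power2_eq_square power3_eq_cube)
    also have "\<dots> = sin (2 * f0 t)" unfolding o using t by simp
    finally show ?thesis unfolding E_def by simp
  qed
  have "(E has_real_derivative (2*y*f2 y + y^2 * f3 y + (2 - 3*y^2/2) * f1 y + (2*y - y^3/2) * f2 y - 2 * cos (2 * f0 y) * f1 y)) (at y)"
    unfolding E_def using d0[rule_format, OF y] d1[rule_format, OF y] d2[rule_format, OF y]
    by (auto intro!: derivative_eq_intros simp: algebra_simps power2_eq_square power3_eq_cube)
  hence "((\<lambda>_. 0::real) has_real_derivative (2*y*f2 y + y^2 * f3 y + (2 - 3*y^2/2) * f1 y + (2*y - y^3/2) * f2 y - 2 * cos (2 * f0 y) * f1 y)) (at y)"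
    by (rule has_field_derivative_transform_within_open[where S="{0<..}"]) (use y E0 in auto)
  thus ?thesis using DERIV_const DERIV_unique by metis
qed

lemma rho_pos: "t > 0 \<Longrightarrow> rho t > 0" unfolding rho_def by simp

lemma rho_deriv: "(rho has_real_derivative exp (-(t^2)/4) * (2*t - t^3/2)) (at t)"
  unfolding rho_def by (auto intro!: derivative_eq_intros simp: algebra_simps power2_eq_square power3_eq_cube)

lemma h_deriv:
  assumes d1: "(f1 has_real_derivative f2 y) (at y)"
    and ode: "f2 y + (2/y - y/2) * f1 y - sin (2 * f0 y) / y^2 = 0" and y: "y > 0"
  shows "((\<lambda>t. rho t * f1 t) has_real_derivative exp (-(y^2)/4) * sin (2 * f0 y)) (at y)"
proof -
  have "((\<lambda>t. rho t * f1 t) has_real_derivative exp (-(y^2)/4) * (2*y - y^3/2) * f1 y + rho y * f2 y) (at y)"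
    using DERIV_mult[OF rho_deriv d1] by (simp add: algebra_simps)
  moreover have "exp (-(y^2)/4) * (2*y - y^3/2) * f1 y + rho y * f2 y = exp (-(y^2)/4) * sin (2 * f0 y)"
  proof -
    have o: "f2 y + (2/y - y/2) * f1 y = sin (2 * f0 y) / y^2" using ode by simp
    have "(2*y - y^3/2) * f1 y + y^2 * f2 y = y^2 * (f2 y + (2/y - y/2) * f1 y)"
      using y by (simp add: field_simps power2_eq_square power3_eq_cube)
    also have "\<dots> = sin (2 * f0 y)" unfolding o using y by simp
    finally have fa: "(2*y - y^3/2) * f1 y + y^2 * f2 y = sin (2 * f0 y)" .
    have "exp (-(y^2)/4) * ((2*y - y^3/2) * f1 y + y^2 * f2 y) = exp (-(y^2)/4) * sin (2 * f0 y)"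
      unfolding fa ..
    thus ?thesis unfolding rho_def by (simp add: algebra_simps)
  qed
  ultimately show ?thesis by simp
qed

lemma g_deriv: "(f1 has_real_derivative f2 y) (at y) \<Longrightarrow> ((\<lambda>t. t * f1 t) has_real_derivative f1 y + y * f2 y) (at y)"
  by (auto intro!: derivative_eq_intros)

lemma P_deriv:
  assumes d1: "(f1 has_real_derivative f2 y) (at y)" and d2: "(f2 has_real_derivative f3 y) (at y)"
    and od: "2*y*f2 y + y^2 * f3 y + (2 - 3*y^2/2) * f1 y + (2*y - y^3/2) * f2 y - 2 * cos (2 * f0 y) * f1 y = 0"
  shows "((\<lambda>t. rho t * (f1 t + t * f2 t)) has_real_derivative exp (-(y^2)/4) * (y^2 + 2 * cos (2 * f0 y)) * (y * f1 y)) (at y)"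
proof -
  have dg: "((\<lambda>t. f1 t + t * f2 t) has_real_derivative f2 y + (f2 y + y * f3 y)) (at y)"
    using d1 d2 by (auto intro!: derivative_eq_intros)
  have "((\<lambda>t. rho t * (f1 t + t * f2 t)) has_real_derivative
      rho y * (f2 y + (f2 y + y * f3 y)) + exp (-(y^2)/4) * (2*y - y^3/2) * (f1 y + y * f2 y)) (at y)"
    by (rule DERIV_mult'[OF rho_deriv dg])
  moreover have "rho y * (f2 y + (f2 y + y * f3 y)) + exp (-(y^2)/4) * (2*y - y^3/2) * (f1 y + y * f2 y)
      = exp (-(y^2)/4) * (y^2 + 2 * cos (2 * f0 y)) * (y * f1 y)"
  proof -
    have id: "y^2 * f3 y = 2 * cos (2 * f0 y) * f1 y - 2*y*f2 y - (2 - 3*y^2/2) * f1 y - (2*y - y^3/2) * f2 y"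
      using od by linarith
    have "(2*y - y^3/2) * (f1 y + y * f2 y) + y^2 * (f2 y + (f2 y + y * f3 y))
        = (2*y - y^3/2) * (f1 y + y * f2 y) + 2 * y^2 * f2 y + y * (y^2 * f3 y)"
      by (simp add: algebra_simps power2_eq_square)
    also have "\<dots> = (y^2 + 2 * cos (2 * f0 y)) * (y * f1 y)"
      unfolding id by (simp add: algebra_simps power2_eq_square power3_eq_cube) (simp add: field_simps)
    finally have fa: "(2*y - y^3/2) * (f1 y + y * f2 y) + y^2 * (f2 y + (f2 y + y * f3 y)) = (y^2 + 2 * cos (2 * f0 y)) * (y * f1 y)" .
    have "exp (-(y^2)/4) * ((2*y - y^3/2) * (f1 y + y * f2 y) + y^2 * (f2 y + (f2 y + y * f3 y)))
        = exp (-(y^2)/4) * ((y^2 + 2 * cos (2 * f0 y)) * (y * f1 y))" unfolding fa ..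
    thus ?thesis unfolding rho_def by (simp add: algebra_simps)
  qed
  ultimately show ?thesis by simp
qed

lemma Q_deriv:
  assumes dW: "(W has_real_derivative W1 y) (at y)"
    and dF: "((\<lambda>t. rho t * W1 t) has_real_derivative F1) (at y)"
    and eqF: "F1 = rho y * (2 * cos (2 * f0 y) / y^2 - lam) * W y"
    and dP: "((\<lambda>t. rho t * (f1 t + t * f2 t)) has_real_derivative exp (-(y^2)/4) * (y^2 + 2 * cos (2 * f0 y)) * (y * f1 y)) (at y)"
    and dg: "((\<lambda>t. t * f1 t) has_real_derivative f1 y + y * f2 y) (at y)"
    and y: "y > 0"
  shows "((\<lambda>t. W t * (rho t * (f1 t + t * f2 t)) - rho t * W1 t * (t * f1 t)) has_real_derivative
      (1 + lam) * exp (-(y^2)/4) * y^3 * f1 y * W y) (at y)"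
proof -
  have "((\<lambda>t. W t * (rho t * (f1 t + t * f2 t)) - rho t * W1 t * (t * f1 t)) has_real_derivative
      W y * (exp (-(y^2)/4) * (y^2 + 2 * cos (2 * f0 y)) * (y * f1 y)) + W1 y * (rho y * (f1 y + y * f2 y))
      - (rho y * W1 y * (f1 y + y * f2 y) + F1 * (y * f1 y))) (at y)"
    by (rule DERIV_diff[OF DERIV_mult'[OF dW dP] DERIV_mult'[OF dF dg]])
  moreover have "W1 y * (rho y * (f1 y + y * f2 y)) + W y * (exp (-(y^2)/4) * (y^2 + 2 * cos (2 * f0 y)) * (y * f1 y))
      - (F1 * (y * f1 y) + rho y * W1 y * (f1 y + y * f2 y)) = (1 + lam) * exp (-(y^2)/4) * y^3 * f1 y * W y"
    unfolding eqF rho_def using y by (simp add: field_simps power2_eq_square power3_eq_cube)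
  ultimately show ?thesis by simp
qed

lemma f1_pos_lemma:
  assumes d0: "\<forall>t>0. (f0 has_real_derivative f1 t) (at t)"
    and d1: "\<forall>t>0. (f1 has_real_derivative f2 t) (at t)"
    and ode: "\<forall>t>0. f2 t + (2/t - t/2) * f1 t - sin (2 * f0 t) / t^2 = 0"
    and monoF: "mono_on {0..} f0"
    and f1nn: "\<forall>t>0. f1 t \<ge> 0"
    and fb1: "\<forall>t>0. f0 t > 0" and fb2: "\<forall>t>0. f0 t < pi" and fb3: "\<forall>t\<ge>1. f0 t > pi/2"
    and y0: "y0 > 0"
  shows "f1 y0 > 0"
proof (rule ccontr)
  assume "\<not> f1 y0 > 0"
  hence z: "f1 y0 = 0" using f1nn y0 by force
  have "f2 y0 = 0"
  proof (rule DERIV_local_min[OF d1[rule_format, OF y0] y0])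
    show "\<forall>y. \<bar>y0 - y\<bar> < y0 \<longrightarrow> f1 y0 \<le> f1 y" using z f1nn by (auto simp: abs_less_iff)
  qed
  hence "sin (2 * f0 y0) / y0^2 = 0" using ode[rule_format, OF y0] z by simp
  hence "sin (2 * f0 y0) = 0" using y0 by simp
  then obtain i :: int where i: "2 * f0 y0 = of_int i * pi" by (auto simp: sin_zero_iff_int2)
  have "0 < of_int i * pi" "of_int i * pi < 2 * pi" using i fb1 fb2 y0 by (metis mult_pos_pos zero_less_numeral, smt (verit))
  hence "0 < i" "i < 2" by (simp_all add: zero_less_mult_iff) 
  hence "i = 1" by simp
  hence f0y0: "f0 y0 = pi/2" using i by simp
  define Y where "Y = max y0 1"
  have Y: "Y \<ge> y0" "Y \<ge> 1" unfolding Y_def by auto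
  have hT: "rho T * f1 T \<le> rho y0 * f1 y0" if T: "T \<ge> y0" for T
  proof (rule DERIV_nonpos_imp_nonincreasing[OF T])
    fix t assume t: "y0 \<le> t" "t \<le> T"
    have tp: "t > 0" using t y0 by simp
    have "f0 t \<ge> pi/2" using monoF f0y0 t y0 by (metis atLeast_iff less_imp_le mono_onD order.trans)
    moreover have "f0 t < pi" using fb2 tp by simp
    ultimately have "sin (2 * f0 t) \<le> 0" by (intro sin_le_zero) auto
    hence "exp (-(t^2)/4) * sin (2 * f0 t) \<le> 0" by (simp add: mult_nonneg_nonpos)
    thus "\<exists>y. ((\<lambda>t. rho t * f1 t) has_real_derivative y) (at t) \<and> y \<le> 0"
      using h_deriv[of f1 f2 t f0, OF d1[rule_format, OF tp] ode[rule_format, OF tp] tp] by blast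
  qed
  have fY: "f1 t \<le> 0" if "t \<ge> y0" for t
  proof -
    have "rho t * f1 t \<le> 0" using hT[OF that] z by simp
    moreover have "rho t > 0" using that y0 by (intro rho_pos) simp
    ultimately show ?thesis by (simp add: mult_le_0_iff)
  qed
  have "f0 Y \<le> f0 y0"
  proof (rule DERIV_nonpos_imp_nonincreasing[OF Y(1)])
    fix t assume t: "y0 \<le> t" "t \<le> Y"
    have tp: "t > 0" using t y0 by simp
    show "\<exists>y. (f0 has_real_derivative y) (at t) \<and> y \<le> 0"
      using d0[rule_format, OF tp] fY[OF t(1)] by blast
  qed
  thus False using fb3 Y f0y0 by fastforce
qed

lemma vd_lemma:
  fixes W W1 f1 f2 :: "real \<Rightarrow> real"
  assumes Wd: "(W has_real_derivative W1 t) (at t)"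
    and gd: "((\<lambda>t. t * f1 t) has_real_derivative f1 t + t * f2 t) (at t)"
    and t: "t > 0" and f1: "f1 t > 0"
  shows "((\<lambda>t. W t / (t * f1 t)) has_real_derivative
     - (W t * (rho t * (f1 t + t * f2 t)) - rho t * W1 t * (t * f1 t)) / (rho t * (t * f1 t)^2)) (at t)"
proof -
  have n: "t * f1 t \<noteq> 0" "rho t \<noteq> 0" using f1 t rho_pos[OF t] by auto
  have "((\<lambda>t. W t / (t * f1 t)) has_real_derivative (W1 t * (t * f1 t) - W t * (f1 t + t * f2 t)) / ((t * f1 t) * (t * f1 t))) (at t)"
    by (rule DERIV_divide[OF Wd gd n(1)])
  moreover have "- (W t * (rho t * (f1 t + t * f2 t)) - rho t * W1 t * (t * f1 t)) = rho t * (W1 t * (t * f1 t) - W t * (f1 t + t * f2 t))"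
    by (simp add: algebra_simps)
  ultimately show ?thesis using n by (simp add: power2_eq_square)
qed

lemma W_lemma:
  fixes W W1 f1 f2 :: "real \<Rightarrow> real"
  assumes Wd: "\<forall>t>0. (W has_real_derivative W1 t) (at t)"
    and init: "((\<lambda>y. (W y - y) / y) \<longlongrightarrow> 0) (at_right 0)"
    and gpos: "\<forall>t>0. f1 t > 0"
    and eta: "\<eta> > 0" "m > 0" "\<forall>t. 0 < t \<and> t \<le> \<eta> \<longrightarrow> m \<le> f1 t \<and> f1 t \<le> M"
    and gd: "\<forall>t>0. ((\<lambda>t. t * f1 t) has_real_derivative f1 t + t * f2 t) (at t)"
    and Qd: "\<forall>t>0. ((\<lambda>t. W t * (rho t * (f1 t + t * f2 t)) - rho t * W1 t * (t * f1 t)) has_real_derivative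
                (1 + lam) * exp (-(t^2)/4) * t^3 * f1 t * W t) (at t)"
    and lam: "lam \<le> -1"
  shows "\<forall>y>0. W y \<noteq> 0"
proof (rule ccontr)
  define Q where "Q = (\<lambda>t. W t * (rho t * (f1 t + t * f2 t)) - rho t * W1 t * (t * f1 t))"
  define g where "g = (\<lambda>t. t * f1 t)"
  have gp: "g t > 0" if "t > 0" for t using gpos that unfolding g_def by simp
  assume "\<not> (\<forall>y>0. W y \<noteq> 0)"
  then obtain y1 where y1: "y1 > 0" "W y1 = 0" by auto
  have "\<forall>\<^sub>F y in at_right 0. dist ((W y - y) / y) 0 < 1/2" using init unfolding tendsto_iff by (metis half_gt_zero zero_less_one)
  then obtain \<delta> where \<delta>: "\<delta> > 0" "\<forall>y>0. y < \<delta> \<longrightarrow> \<bar>(W y - y) / y\<bar> < 1/2"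
    unfolding eventually_at_right_field dist_real_def by auto
  have Wnear: "W y > 0 \<and> W y < 2 * y" if "0 < y" "y < \<delta>" for y
  proof -
    have "\<bar>W y - y\<bar> < y/2" using \<delta>(2) that by (simp add: abs_divide field_simps)
    thus ?thesis using that unfolding abs_less_iff by linarith
  qed
  have cont: "isCont W t" if "t > 0" for t using Wd that DERIV_isCont by blast
  define Z where "Z = {y. y > 0 \<and> W y = 0}"
  define z where "z = Inf Z"
  have Zne: "Z \<noteq> {}" using y1 unfolding Z_def by auto
  have Zge: "\<forall>t\<in>Z. \<delta> \<le> t"
  proof
    fix t assume "t \<in> Z"
    hence t: "t > 0" "W t = 0" unfolding Z_def by auto
    show "\<delta> \<le> t"
    proof (rule ccontr)
      assume "\<not> \<delta> \<le> t" thus False using Wnear[of t] t by simp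
    qed
  qed
  have Zbdd: "bdd_below Z" using Zge by (auto simp: bdd_below_def)
  have zd: "\<delta> \<le> z" unfolding z_def by (rule cInf_greatest[OF Zne]) (use Zge in auto)
  have zp: "z > 0" using zd \<delta> by simp
  have Wz: "W z = 0"
  proof (rule ccontr)
    assume ne: "W z \<noteq> 0"
    have "\<forall>\<^sub>F t in at z. W t \<noteq> 0" using cont[OF zp] ne unfolding isCont_def by (rule tendsto_imp_eventually_ne)
    then obtain d where d: "d > 0" "\<forall>t. t \<noteq> z \<and> dist t z < d \<longrightarrow> W t \<noteq> 0" unfolding eventually_at by auto
    have "\<forall>t\<in>Z. z + d \<le> t"
    proof
      fix t assume t: "t \<in> Z"
      have "z \<le> t" unfolding z_def by (rule cInf_lower[OF t Zbdd])
      moreover have "t \<noteq> z" using t ne unfolding Z_def by auto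
      moreover have "W t = 0" using t unfolding Z_def by auto
      ultimately show "z + d \<le> t" using d(2)[rule_format, of t] unfolding dist_real_def by force
    qed
    hence "z + d \<le> z" unfolding z_def by (intro cInf_greatest[OF Zne]) (auto simp: z_def)
    thus False using d by simp
  qed
  have Wpos: "W t > 0" if "0 < t" "t < z" for t
  proof -
    have nz: "W s \<noteq> 0" if "0 < s" "s < z" for s
    proof
      assume "W s = 0" hence "s \<in> Z" using that unfolding Z_def by auto
      hence "z \<le> s" unfolding z_def by (rule cInf_lower[OF _ Zbdd])
      thus False using that by simp
    qed
    show ?thesis
    proof (cases "t < \<delta>")
      case True thus ?thesis using Wnear that by auto
    next
      case False
      define a where "a = \<delta>/2"
      have a: "0 < a" "a < \<delta>" "a \<le> t" using \<delta> False unfolding a_def by auto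
      have Wa: "W a > 0" using Wnear a by auto
      show ?thesis
      proof (rule ccontr)
        assume "\<not> W t > 0"
        hence "W t \<le> 0" by simp
        then obtain s where s: "a \<le> s" "s \<le> t" "W s = 0"
          using IVT2[of W t 0 a] a Wa cont by force
        thus False using nz[of s] a that by auto
      qed
    qed
  qed
  have Wz1: "W1 z \<le> 0"
  proof (rule ccontr)
    assume "\<not> W1 z \<le> 0"
    then obtain d where d: "d > 0" "\<forall>h>0. h < d \<longrightarrow> W (z - h) < W z"
      using DERIV_pos_inc_left[OF Wd[rule_format, OF zp]] by force
    define h where "h = min d z / 2"
    have h: "0 < h" "h < d" "h < z" using d zp unfolding h_def by auto
    have "W (z - h) < 0" using d(2) h Wz by auto
    moreover have "W (z - h) > 0" using Wpos[of "z - h"] h by auto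
    ultimately show False by simp
  qed
  have Qd': "(Q has_real_derivative (1 + lam) * exp (-(t^2)/4) * t^3 * f1 t * W t) (at t)" if "t > 0" for t
    unfolding Q_def by (rule Qd[rule_format, OF that])
  have Qz: "Q z \<ge> 0"
  proof -
    have r: "rho z > 0" by (rule rho_pos[OF zp])
    have gz: "z * f1 z > 0" using gpos zp by simp
    have a: "rho z * W1 z \<le> 0" using r Wz1 by (intro mult_nonneg_nonpos) auto
    have "rho z * W1 z * (z * f1 z) \<le> 0" using gz by (intro mult_nonpos_nonneg[OF a]) simp
    thus ?thesis unfolding Q_def using Wz by simp
  qed
  have Qmono: "Q s \<le> Q t" if "0 < t" "t \<le> s" "s \<le> z" for s t
  proof (rule DERIV_nonpos_imp_nonincreasing[OF that(2)])
    fix u assume u: "t \<le> u" "u \<le> s"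
    have up: "u > 0" using u that by simp
    have "W u \<ge> 0"
    proof (cases "u < z")
      case True thus ?thesis using Wpos[of u] up by simp
    next
      case False hence "u = z" using u that by simp
      thus ?thesis using Wz by simp
    qed
    moreover have "f1 u > 0" using gpos up by simp
    ultimately have "0 \<le> exp (-(u^2)/4) * u^3 * f1 u * W u" using up by simp
    moreover have "1 + lam \<le> 0" using lam by simp
    ultimately have "(1 + lam) * exp (-(u^2)/4) * u^3 * f1 u * W u \<le> 0"
      using mult_nonpos_nonneg[of "1 + lam" "exp (-(u^2)/4) * u^3 * f1 u * W u"] by (simp add: mult.assoc)
    thus "\<exists>y. (Q has_real_derivative y) (at u) \<and> y \<le> 0" using Qd'[OF up] by blast
  qed
  have Qnn: "Q t \<ge> 0" if "0 < t" "t \<le> z" for t using Qmono[OF that(1) that(2) order_refl] Qz by simp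
  have vd: "((\<lambda>t. W t / g t) has_real_derivative - Q t / (rho t * (g t)^2)) (at t)" if t: "t > 0" for t
    unfolding Q_def g_def by (rule vd_lemma[of W W1 t f1 f2, OF Wd[rule_format, OF t] gd[rule_format, OF t] t gpos[rule_format, OF t]])
  show False
  proof (cases "\<forall>y. 0 < y \<and> y < z \<longrightarrow> Q y = 0")
    case True
    have Q0: "Q t = 0" if "z/2 \<le> t" "t \<le> z" for t
    proof (cases "t < z")
      case True thus ?thesis using \<open>\<forall>y. 0 < y \<and> y < z \<longrightarrow> Q y = 0\<close> that zp by auto
    next
      case False
      hence "t = z" using that by simp
      moreover have "Q z \<le> Q (z/2)" using Qmono[of "z/2" z] zp by simp
      moreover have "Q (z/2) = 0" using True zp by auto
      ultimately show ?thesis using Qz by simp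
    qed
    have "W (z/2) / g (z/2) \<le> W z / g z"
    proof (rule DERIV_nonneg_imp_nondecreasing[of "z/2" z])
      fix t assume t: "z/2 \<le> t" "t \<le> z"
      have tp: "t > 0" using t zp by simp
      show "\<exists>y. ((\<lambda>t. W t / g t) has_real_derivative y) (at t) \<and> 0 \<le> y"
        using vd[OF tp] Q0[OF t] by auto
    qed (use zp in simp)
    moreover have "W (z/2) / g (z/2) > 0" using Wpos[of "z/2"] gp[of "z/2"] zp by simp
    ultimately show False using Wz by simp
  next
    case False
    then obtain y2 where y2: "0 < y2" "y2 < z" "Q y2 \<noteq> 0" by auto
    define q where "q = Q y2"
    have qp: "q > 0" using Qnn[of y2] y2 unfolding q_def by simp
    have Mp: "M > 0" using eta(3)[rule_format, of "min \<eta> 1"] eta(1,2) by auto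
    define y3 where "y3 = min y2 \<eta>"
    have y3: "0 < y3" "y3 \<le> y2" "y3 \<le> \<eta>" "y3 < z" using y2 eta unfolding y3_def by auto
    define K where "K = q / (3 * M^2)"
    have Kp: "K > 0" unfolding K_def using qp Mp by simp
    define H where "H = (\<lambda>t. W t / g t - K / t^3)"
    have Hmono: "H y3 \<le> H t" if t: "0 < t" "t \<le> y3" for t
    proof (rule DERIV_nonpos_imp_nonincreasing[OF t(2)])
      fix u assume u: "t \<le> u" "u \<le> y3"
      have up: "u > 0" using u t by simp
      have dK: "((\<lambda>t. K / t^3) has_real_derivative - (3 * K / u^4)) (at u)"
        using up by (auto intro!: derivative_eq_intros simp: field_simps power_eq_if)
      have dH: "(H has_real_derivative - Q u / (rho u * (g u)^2) - - (3 * K / u^4)) (at u)"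
        unfolding H_def by (rule DERIV_diff[OF vd[OF up] dK])
      have Qu: "Q u \<ge> q" unfolding q_def using Qmono[of u y2] up u y3 y2 by simp
      have f1u: "0 < f1 u" "f1 u \<le> M" using gpos up eta(3) u y3 by auto
      have e1: "exp (-(u^2)/4) \<le> 1" by simp
      have "rho u * (g u)^2 = exp (-(u^2)/4) * (u^4 * (f1 u)^2)" unfolding rho_def g_def
        by (simp add: power2_eq_square power4_eq_xxxx algebra_simps)
      also have "\<dots> \<le> 1 * (u^4 * M^2)"
        using e1 f1u up by (intro mult_mono mult_left_mono power_mono) auto
      finally have rg: "rho u * (g u)^2 \<le> u^4 * M^2" by simp
      have rgp: "rho u * (g u)^2 > 0" using rho_pos[OF up] gp[OF up] by simp
      have "3 * K / u^4 = q / (u^4 * M^2)" unfolding K_def using up Mp by (simp add: field_simps)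
      also have "\<dots> \<le> Q u / (rho u * (g u)^2)"
        using rg rgp Qu qp by (intro frac_le) auto
      finally have "- Q u / (rho u * (g u)^2) - - (3 * K / u^4) \<le> 0" by simp
      thus "\<exists>y. (H has_real_derivative y) (at u) \<and> y \<le> 0" using dH by blast
    qed
    define C where "C = 2 / m - H y3"
    define a where "a = min (min y3 (\<delta>/2)) (min 1 (K / (\<bar>C\<bar> + 1)))"
    have KC0: "K / (\<bar>C\<bar> + 1) > 0" using Kp by (intro divide_pos_pos) auto
    have a: "0 < a" "a \<le> y3" "a \<le> \<delta>/2" "a \<le> 1" "a \<le> K / (\<bar>C\<bar> + 1)"
    proof -
      have m: "a \<le> min y3 (\<delta>/2)" "a \<le> min 1 (K / (\<bar>C\<bar> + 1))" unfolding a_def by (rule min.cobounded1, rule min.cobounded2)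
      have "min y3 (\<delta>/2) \<le> y3" "min y3 (\<delta>/2) \<le> \<delta>/2" "min 1 (K / (\<bar>C\<bar> + 1)) \<le> 1"
        "min 1 (K / (\<bar>C\<bar> + 1)) \<le> K / (\<bar>C\<bar> + 1)" by (rule min.cobounded1 min.cobounded2)+
      moreover have "0 < a" unfolding a_def using y3(1) \<delta>(1) KC0 by simp
      ultimately show "0 < a" "a \<le> y3" "a \<le> \<delta>/2" "a \<le> 1" "a \<le> K / (\<bar>C\<bar> + 1)" using m by linarith+
    qed
    define t where "t = a / 2"
    have t: "0 < t" "t \<le> y3" "t < \<delta>" "t \<le> 1" "t < K / (\<bar>C\<bar> + 1)"
      using a \<delta>(1) unfolding t_def by linarith+
    have "t^3 \<le> t" using t by (simp add: power3_eq_cube mult_le_one mult_left_le_one_le)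
    hence "K / t \<le> K / t^3" using t Kp by (intro divide_left_mono) auto
    moreover have "\<bar>C\<bar> + 1 < K / t" using t(1,5) by (simp add: field_simps)
    ultimately have KC: "C < K / t^3" by linarith
    have vt: "W t / g t \<ge> H y3 + K / t^3" using Hmono[OF t(1,2)] unfolding H_def by simp
    have gt: "g t \<ge> t * m" using eta(3)[rule_format, of t] t y3 unfolding g_def by (simp add: mult_left_mono)
    have Wt: "W t = W t / g t * g t" using gp[OF t(1)] by simp
    have "W t \<ge> W t / g t * (t * m)"
      using gt Wpos[of t] gp[of t] t y3 by (subst Wt, intro mult_left_mono) auto
    moreover have "W t / g t * (t * m) \<ge> (H y3 + K / t^3) * (t * m)"
      using vt t eta by (intro mult_right_mono) auto
    moreover have "W t < 2 * t" using Wnear t by auto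
    ultimately have "(H y3 + K / t^3) * (t * m) < 2 * t" by linarith
    hence "((H y3 + K / t^3) * m) * t < 2 * t" by (simp add: mult.assoc mult.commute mult.left_commute)
    hence "(H y3 + K / t^3) * m < 2" using t(1) by (simp add: mult_less_cancel_right_pos)
    hence "H y3 + K / t^3 < 2 / m" using eta by (simp add: field_simps)
    thus False using KC unfolding C_def by linarith
  qed
qed

theorem lemma4:
  fixes f0 :: "real \<Rightarrow> real" and lam :: real and W :: "real \<Rightarrow> real"
  assumes smooth: "smooth_on_nonneg f0"
    and mono: "mono_on {0..} f0 \<or> antimono_on {0..} f0"
    and ode: "\<forall>y>0. deriv (deriv f0) y + (2 / y - y / 2) * deriv f0 y
                 - sin (2 * f0 y) / y^2 = 0"
    and f0_0: "f0 0 = 0"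
    and f0_lim: "\<exists>L. (f0 \<longlongrightarrow> L) at_top"
    and close: "weighted_norm_le (\<lambda>y. f0 y - f0_approx y) (5 / 10^4)"
    and W_diff: "\<forall>y>0. W differentiable (at y)"
    and W_flux_diff: "\<forall>y>0. (\<lambda>t. rho t * deriv W t) differentiable (at y)"
    and W_eq: "\<forall>y>0. - (1 / rho y) * deriv (\<lambda>t. rho t * deriv W t) y
                 + 2 * cos (2 * f0 y) / y^2 * W y = lam * W y"
    and W_init: "((\<lambda>y. (W y - y) / y) \<longlongrightarrow> 0) (at_right 0)"
    and lam_le: "lam \<le> -1"
  shows "\<forall>y>0. W y \<noteq> 0"
proof -
  obtain D where D0: "D 0 = f0"
    and Dd: "\<forall>n y. y \<ge> 0 \<longrightarrow> (D n has_real_derivative D (Suc n) y) (at y within {0..})"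
    using smooth unfolding smooth_on_nonneg_def by blast
  define f1 where "f1 = D (Suc 0)"
  define f2 where "f2 = D (Suc (Suc 0))"
  define f3 where "f3 = D (Suc (Suc (Suc 0)))"
  have d0: "\<forall>t>0. (f0 has_real_derivative f1 t) (at t)"
  proof (intro allI impI)
    fix t :: real assume t: "t > 0"
    show "(f0 has_real_derivative f1 t) (at t)"
      using to_at[OF Dd[rule_format, of t 0, OF less_imp_le[OF t]] t] D0 unfolding f1_def by simp
  qed
  have d1: "\<forall>t>0. (f1 has_real_derivative f2 t) (at t)"
  proof (intro allI impI)
    fix t :: real assume t: "t > 0"
    show "(f1 has_real_derivative f2 t) (at t)"
      using to_at[OF Dd[rule_format, of t "Suc 0", OF less_imp_le[OF t]] t] unfolding f1_def f2_def by simp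
  qed
  have d2: "\<forall>t>0. (f2 has_real_derivative f3 t) (at t)"
  proof (intro allI impI)
    fix t :: real assume t: "t > 0"
    show "(f2 has_real_derivative f3 t) (at t)"
      using to_at[OF Dd[rule_format, of t "Suc (Suc 0)", OF less_imp_le[OF t]] t] unfolding f2_def f3_def by simp
  qed
  have dv0: "deriv f0 t = f1 t" if "t > 0" for t using d0 that DERIV_imp_deriv by blast
  have dv1: "deriv (deriv f0) t = f2 t" if t: "t > 0" for t
  proof -
    have "(deriv f0 has_real_derivative f2 t) (at t)"
      by (rule has_field_derivative_transform_within_open[OF d1[rule_format, OF t], of "{0<..}"])
         (use t dv0 in auto)
    thus ?thesis by (rule DERIV_imp_deriv)
  qed
  have ode': "\<forall>t>0. f2 t + (2/t - t/2) * f1 t - sin (2 * f0 t) / t^2 = 0"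
    using ode dv0 dv1 by simp
  have odd: "2*t*f2 t + t^2 * f3 t + (2 - 3*t^2/2) * f1 t + (2*t - t^3/2) * f2 t - 2 * cos (2 * f0 t) * f1 t = 0"
    if "t > 0" for t by (rule ode_diff[OF d0 d1 d2 ode' that])
  have fb1: "\<forall>t>0. f0 t > 0"
  proof (intro allI impI)
    fix t :: real assume t: "t > 0"
    show "f0 t > 0" using f_bounds(1)[OF close t] x_bounds(1)[OF t] by simp
  qed
  have fb2: "\<forall>t>0. f0 t < pi"
  proof (intro allI impI)
    fix t :: real assume t: "t > 0" show "f0 t < pi" by (rule f_bounds(2)[OF close t])
  qed
  have fb3: "\<forall>t\<ge>1. f0 t > pi/2"
  proof (intro allI impI)
    fix t :: real assume t: "t \<ge> 1" show "f0 t > pi/2" by (rule f_bounds(3)[OF close _ t]) (use t in simp)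
  qed
  have monoF: "mono_on {0..} f0"
  proof -
    { assume am: "antimono_on {0..} f0"
      have "f0 1 \<le> f0 0" using monotone_onD[OF am, of 0 1] by simp
      moreover have "f0 1 > 0" using fb1 by simp
      ultimately have False using f0_0 by simp }
    thus ?thesis using mono by blast
  qed
  have f1nn: "\<forall>t>0. f1 t \<ge> 0"
  proof (intro allI impI)
    fix t :: real assume t: "t > 0"
    show "f1 t \<ge> 0"
    proof (rule ccontr)
      assume "\<not> f1 t \<ge> 0"
      hence "f1 t < 0" by simp
      then obtain d where d: "d > 0" "\<forall>h>0. h < d \<longrightarrow> f0 t > f0 (t + h)"
        using DERIV_neg_dec_right[OF d0[rule_format, OF t]] by blast
      have "f0 t > f0 (t + d/2)" using d by simp
      moreover have "f0 t \<le> f0 (t + d/2)" using mono_onD[OF monoF, of t "t + d/2"] t d by simp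
      ultimately show False by simp
    qed
  qed
  have gpos: "\<forall>t>0. f1 t > 0"
    using f1_pos_lemma[OF d0 d1 ode' monoF f1nn fb1 fb2 fb3] by blast
  have d00: "(f0 has_real_derivative f1 0) (at 0 within {0..})"
    using Dd[rule_format, of 0 0] D0 unfolding f1_def by simp
  have "((\<lambda>y. (f0 y - f0 0) / (y - 0)) \<longlongrightarrow> f1 0) (at 0 within {0..})"
    using d00 unfolding has_field_derivative_iff .
  hence l1: "((\<lambda>y. f0 y / y) \<longlongrightarrow> f1 0) (at 0 within {0..})" using f0_0 by simp
  have lim: "((\<lambda>y. f0 y / y) \<longlongrightarrow> f1 0) (at_right 0)"
    by (rule tendsto_within_subset[OF l1]) auto
  have ev: "\<forall>\<^sub>F y in at_right 0. 1/4 \<le> f0 y / y"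
    unfolding eventually_at_right_field
  proof (intro exI[of _ 1] conjI allI impI)
    fix y :: real assume y: "y > 0" "y < 1"
    have "sqrt (2 + y^2) \<le> 2"
    proof (rule real_le_lsqrt)
      have "y^2 \<le> 1" using y by (simp add: power_le_one)
      thus "2 + y^2 \<le> 2^2" by simp
    qed simp
    hence "y / 2 \<le> y / sqrt (2 + y^2)" using y by (intro divide_left_mono) (auto simp: add_pos_nonneg)
    moreover have "1/2 * (y / sqrt (2 + y^2)) \<le> f0 y" by (rule f_bounds(1)[OF close y(1)])
    ultimately have "y / 4 \<le> f0 y" by linarith
    thus "1/4 \<le> f0 y / y" using y by (simp add: field_simps)
  qed simp
  have f10: "1/4 \<le> f1 0" by (rule tendsto_lowerbound[OF lim ev]) simp
  have cont1: "continuous (at 0 within {0..}) f1"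
    using DERIV_continuous[OF Dd[rule_format, of 0 "Suc 0"]] unfolding f1_def by simp
  have hp: "f1 0 / 2 > 0" using f10 by simp
  obtain \<eta>0 where \<eta>0: "\<eta>0 > 0" "\<forall>x'\<in>{0..}. dist x' 0 < \<eta>0 \<longrightarrow> dist (f1 x') (f1 0) < f1 0 / 2"
    using cont1[unfolded continuous_within_eps_delta, rule_format, OF hp] by blast
  define \<eta> where "\<eta> = \<eta>0 / 2"
  have eta: "\<eta> > 0" "f1 0 / 2 > 0" "\<forall>t. 0 < t \<and> t \<le> \<eta> \<longrightarrow> f1 0 / 2 \<le> f1 t \<and> f1 t \<le> 3 * f1 0 / 2"
  proof -
    show "\<eta> > 0" "f1 0 / 2 > 0" using \<eta>0 f10 unfolding \<eta>_def by auto
    show "\<forall>t. 0 < t \<and> t \<le> \<eta> \<longrightarrow> f1 0 / 2 \<le> f1 t \<and> f1 t \<le> 3 * f1 0 / 2"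
    proof (intro allI impI)
      fix t assume t: "0 < t \<and> t \<le> \<eta>"
      hence "dist (f1 t) (f1 0) < f1 0 / 2" using \<eta>0 unfolding \<eta>_def by (auto simp: dist_real_def)
      hence "\<bar>f1 t - f1 0\<bar> < f1 0 / 2" unfolding dist_real_def .
      thus "f1 0 / 2 \<le> f1 t \<and> f1 t \<le> 3 * f1 0 / 2" unfolding abs_less_iff by linarith
    qed
  qed
  \<comment> \<open>the Wronskian argument\<close>
  have Wd: "\<forall>t>0. (W has_real_derivative deriv W t) (at t)"
    using W_diff DERIV_deriv_iff_real_differentiable by blast
  have gd: "\<forall>t>0. ((\<lambda>t. t * f1 t) has_real_derivative f1 t + t * f2 t) (at t)"
    using d1 g_deriv by blast
  have Qd: "\<forall>t>0. ((\<lambda>t. W t * (rho t * (f1 t + t * f2 t)) - rho t * deriv W t * (t * f1 t)) has_real_derivative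
                (1 + lam) * exp (-(t^2)/4) * t^3 * f1 t * W t) (at t)"
  proof (intro allI impI)
    fix t :: real assume t: "t > 0"
    define F1 where "F1 = deriv (\<lambda>t. rho t * deriv W t) t"
    have dF: "((\<lambda>t. rho t * deriv W t) has_real_derivative F1) (at t)"
      unfolding F1_def using W_flux_diff t DERIV_deriv_iff_real_differentiable by blast
    have eqF: "F1 = rho t * (2 * cos (2 * f0 t) / t^2 - lam) * W t"
    proof -
      have r: "rho t \<noteq> 0" using rho_pos[OF t] by simp
      have "- (1 / rho t) * F1 + 2 * cos (2 * f0 t) / t^2 * W t = lam * W t"
        using W_eq t unfolding F1_def by blast
      hence "F1 / rho t = (2 * cos (2 * f0 t) / t^2 - lam) * W t" by (simp add: algebra_simps)
      thus ?thesis using r by (simp add: field_simps)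
    qed
    show "((\<lambda>t. W t * (rho t * (f1 t + t * f2 t)) - rho t * deriv W t * (t * f1 t)) has_real_derivative
                (1 + lam) * exp (-(t^2)/4) * t^3 * f1 t * W t) (at t)"
      by (rule Q_deriv[where W=W and ?W1.0="deriv W" and y=t and ?F1.0=F1 and ?f0.0=f0 and lam=lam and ?f1.0=f1 and ?f2.0=f2,
            OF Wd[rule_format, OF t] dF eqF
            P_deriv[where ?f1.0=f1 and ?f2.0=f2 and y=t and ?f3.0=f3 and ?f0.0=f0, OF d1[rule_format, OF t] d2[rule_format, OF t] odd[OF t]]
            g_deriv[where ?f1.0=f1 and ?f2.0=f2 and y=t, OF d1[rule_format, OF t]] t])
  qed
  show ?thesis by (rule W_lemma[where W=W and ?W1.0="deriv W" and ?f1.0=f1 and ?f2.0=f2, OF Wd W_init gpos eta gd Qd lam_le])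
qed

end
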